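(* Let $\dagger=\Omega_1\land\cdots\land\Omega_M$ be a $3$-SAT formula in CNF over Boolean variables $\sigma_1,\dots,\sigma_N$, each clause $\Omega_k=(\ell^k_1\lor\ell^k_2\lor\ell^k_3)$ consisting of exactly three literals over three distinct variables. Let $\ddagger$ be the Max $2$-SAT instance over $\sigma_1,\dots,\sigma_N,d^1,\dots,d^M$ consisting, for each $k$, of the block $\Omega'_k$ of $10$ clauses $$(\ell^k_1),(\ell^k_2),(\ell^k_3),(d^k),(\neg\ell^k_1\lor\neg\ell^k_2),(\neg\ell^k_1\lor\neg\ell^k_3),(\neg\ell^k_2\lor\neg\ell^k_3),(\ell^k_1\lor\neg d^k),(\ell^k_2\lor\neg d^k),(\ell^k_3\lor\neg d^k).$$ Suppose $\ddagger$ has been solved, yielding an assignment of all $N+M$ variables. For $a\in\{0,1\}$ let $I_a=\{k: d^k=a\}$, let $\mathfrak{S}_a$ be the number of satisfied clauses of $\ddagger$ lying in the blocks $\Omega'_k$, $k\in I_a$, and let $\mathcal{V}_a,\mathcal{S}_a$ be the numbers of $k\in I_a$ for which $\Omega_k$ is violated, respectively satisfied. Let $\mathcal{V}=\mathcal{V}_0+\mathcal{V}_1$ and $\mathcal{S}=\mathcal{S}_0+\mathcal{S}_1$ be the numbers of violated and satisfied clauses of $\dagger$. Then: (i) $(\mathcal{V}_0,\mathcal{S}_0)$ is the unique non-negative integer solution of $6\mathcal{V}_0+7\mathcal{S}_0=\mathfrak{S}_0$, $\mathcal{V}_0+\mathcal{S}_0=|I_0|$; (ii) (determination by enumeration) $(\mathcal{V}_1,\mathcal{S}_1)$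 lies in the finite set of pairs $(v,\,s_2+s_3)$ where $(s_2,s_3,v)$ ranges over the non-negative integer solutions of $\mathfrak{S}_1=6s_2+7s_3+4v$, $|I_1|=v+s_2+s_3$; consequently $(\mathcal{V},\mathcal{S})$ lies in a finite set of candidates computable from $\mathfrak{S}_0,\mathfrak{S}_1,|I_0|,|I_1|$; (iii) if in addition the number of Case 1 clauses (those $k$ with $\ell^k_1=\ell^k_2=\ell^k_3=0$) is known, then the exact values of $\mathcal{V}$ and $\mathcal{S}$ are retrieved.
   Context: Truth values are identified with $\{0,1\}$. "Case 1" refers to a clause $\Omega_k$ whose three literals are all false under the assignment. The variables $d^k$ are called ancillary variables. *)

theory Defs
  imports Main
begin

text \<open>Variables of the Max 2-SAT instance: the original variables sigma_i
  (index i) and the ancillary variables d^k (index k). Indices are 0-based.\<close>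
datatype var = Sig nat | D nat

text \<open>A literal over variables of type 'v is a pair (variable, polarity);
  polarity True means the positive literal. Truth values are bool (0 = False, 1 = True).\<close>
type_synonym 'v lit = "'v \<times> bool"

definition lit_val :: "('v \<Rightarrow> bool) \<Rightarrow> 'v lit \<Rightarrow> bool" where
  "lit_val \<alpha> l = (if snd l then \<alpha> (fst l) else \<not> \<alpha> (fst l))"

definition neg_lit :: "'v lit \<Rightarrow> 'v lit" where
  "neg_lit l = (fst l, \<not> snd l)"

definition clause_sat :: "('v \<Rightarrow> bool) \<Rightarrow> 'v lit list \<Rightarrow> bool" where
  "clause_sat \<alpha> C = (\<exists>l\<in>set C. lit_val \<alpha> l)"

definition is_3sat :: "nat \<Rightarrow> nat lit list list \<Rightarrow> bool" where
  "is_3sat N F = (\<forall>C\<in>set F. length C = 3 \<and> distinct (map fst C) \<and> (\<forall>l\<in>set C. fst l < N))"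

definition lift :: "nat lit \<Rightarrow> var lit" where
  "lift l = (Sig (fst l), snd l)"

definition block :: "nat lit list list \<Rightarrow> nat \<Rightarrow> var lit list list" where
  "block F k = (let l1 = lift (F!k!0); l2 = lift (F!k!1); l3 = lift (F!k!2); d = (D k, True) in
     [[l1], [l2], [l3], [d],
      [neg_lit l1, neg_lit l2], [neg_lit l1, neg_lit l3], [neg_lit l2, neg_lit l3],
      [l1, neg_lit d], [l2, neg_lit d], [l3, neg_lit d]])"

definition max2sat :: "nat lit list list \<Rightarrow> var lit list list" where
  "max2sat F = concat (map (block F) [0..<length F])"

definition num_sat :: "(var \<Rightarrow> bool) \<Rightarrow> var lit list list \<Rightarrow> nat" where
  "num_sat \<alpha> Cs = length (filter (clause_sat \<alpha>) Cs)"

definition solves_max2sat :: "nat lit list list \<Rightarrow> (var \<Rightarrow> bool) \<Rightarrow> bool" where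
  "solves_max2sat F \<alpha> = (\<forall>\<beta>. num_sat \<beta> (max2sat F) \<le> num_sat \<alpha> (max2sat F))"

definition Iset :: "nat lit list list \<Rightarrow> (var \<Rightarrow> bool) \<Rightarrow> bool \<Rightarrow> nat set" where
  "Iset F \<alpha> a = {k. k < length F \<and> \<alpha> (D k) = a}"

definition frakS :: "nat lit list list \<Rightarrow> (var \<Rightarrow> bool) \<Rightarrow> bool \<Rightarrow> nat" where
  "frakS F \<alpha> a = (\<Sum>k\<in>Iset F \<alpha> a. num_sat \<alpha> (block F k))"

definition orig_sat :: "(var \<Rightarrow> bool) \<Rightarrow> nat lit list \<Rightarrow> bool" where
  "orig_sat \<alpha> C = clause_sat (\<lambda>i. \<alpha> (Sig i)) C"

definition Vcount :: "nat lit list list \<Rightarrow> (var \<Rightarrow> bool) \<Rightarrow> bool \<Rightarrow> nat" where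
  "Vcount F \<alpha> a = card {k\<in>Iset F \<alpha> a. \<not> orig_sat \<alpha> (F!k)}"

definition Scount :: "nat lit list list \<Rightarrow> (var \<Rightarrow> bool) \<Rightarrow> bool \<Rightarrow> nat" where
  "Scount F \<alpha> a = card {k\<in>Iset F \<alpha> a. orig_sat \<alpha> (F!k)}"

definition cand1 :: "nat \<Rightarrow> nat \<Rightarrow> (nat \<times> nat) set" where
  "cand1 S1 n1 = {(v, s2 + s3) | v s2 s3. S1 = 6*s2 + 7*s3 + 4*v \<and> n1 = v + s2 + s3}"

definition cand :: "nat \<Rightarrow> nat \<Rightarrow> nat \<Rightarrow> nat \<Rightarrow> (nat \<times> nat) set" where
  "cand S0 S1 n0 n1 = {(v0 + v1, s0 + s1) | v0 s0 v1 s1.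
      6*v0 + 7*s0 = S0 \<and> v0 + s0 = n0 \<and> (v1, s1) \<in> cand1 S1 n1}"

definition case1_count :: "nat lit list list \<Rightarrow> (var \<Rightarrow> bool) \<Rightarrow> nat" where
  "case1_count F \<alpha> = card {k. k < length F \<and> (\<forall>l\<in>set (F!k). \<not> lit_val (\<lambda>i. \<alpha> (Sig i)) l)}"

end

theory Submission imports Defs begin

definition bcount :: "bool \<Rightarrow> bool \<Rightarrow> bool \<Rightarrow> bool \<Rightarrow> nat" where
  "bcount d a b c = length (filter id [a, b, c, d, \<not>a \<or> \<not>b, \<not>a \<or> \<not>c, \<not>b \<or> \<not>c, a \<or> \<not>d, b \<or> \<not>d, c \<or> \<not>d])"

lemma block_count:
  "num_sat \<alpha> (block F k) = bcount (\<alpha> (D k)) (lit_val \<alpha> (lift (F!k!0))) (lit_val \<alpha> (lift (F!k!1))) (lit_val \<alpha> (lift (F!k!2)))"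
  unfolding num_sat_def block_def Let_def bcount_def
  by (simp add: clause_sat_def lit_val_def neg_lit_def)

lemma num_sat_max2sat:
  "num_sat \<beta> (max2sat F) = (\<Sum>k<length F. num_sat \<beta> (block F k))"
proof -
  have "num_sat \<beta> (max2sat F) = sum_list (map (\<lambda>k. num_sat \<beta> (block F k)) [0..<length F])"
    unfolding num_sat_def max2sat_def by (simp add: filter_concat length_concat o_def)
  also have "\<dots> = (\<Sum>k<length F. num_sat \<beta> (block F k))"
    by (simp add: sum_set_upt_conv_sum_list_nat[symmetric] atLeast0LessThan)
  finally show ?thesis .
qed

lemma lit_lift: "lit_val \<alpha> (lift l) = lit_val (\<lambda>i. \<alpha> (Sig i)) l"
  by (simp add: lit_val_def lift_def)

lemma optimal_block:
  assumes opt: "solves_max2sat F \<alpha>" and k: "k < length F"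
  shows "bcount (\<not> \<alpha> (D k)) (lit_val \<alpha> (lift (F!k!0))) (lit_val \<alpha> (lift (F!k!1))) (lit_val \<alpha> (lift (F!k!2)))
       \<le> num_sat \<alpha> (block F k)"
proof (rule ccontr)
  assume c: "\<not> ?thesis"
  define \<beta> where "\<beta> = \<alpha>(D k := \<not> \<alpha> (D k))"
  have lv: "lit_val \<beta> (lift l) = lit_val \<alpha> (lift l)" for l
    by (simp add: lit_lift \<beta>_def)
  have le: "num_sat \<alpha> (block F j) \<le> num_sat \<beta> (block F j)" if "j < length F" for j
  proof (cases "j = k")
    case True thus ?thesis using c unfolding block_count lv by (simp add: \<beta>_def)
  next
    case False thus ?thesis unfolding block_count lv by (simp add: \<beta>_def)
  qed
  have lt: "num_sat \<alpha> (block F k) < num_sat \<beta> (block F k)"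
    using c unfolding block_count lv by (simp add: \<beta>_def)
  have "(\<Sum>k<length F. num_sat \<alpha> (block F k)) < (\<Sum>k<length F. num_sat \<beta> (block F k))"
    by (rule sum_strict_mono_ex1) (use le lt k in auto)
  with opt show False unfolding solves_max2sat_def num_sat_max2sat
    by (metis not_le)
qed

lemma key:
  assumes F3: "is_3sat N F" and opt: "solves_max2sat F \<alpha>" and k: "k < length F"
  shows "(\<not> \<alpha> (D k) \<longrightarrow> num_sat \<alpha> (block F k) = (if orig_sat \<alpha> (F!k) then 7 else 6))
       \<and> (\<alpha> (D k) \<longrightarrow> orig_sat \<alpha> (F!k) \<and> num_sat \<alpha> (block F k) = 7)"
proof -
  have "length (F!k) = 3" using F3 k by (simp add: is_3sat_def)
  then obtain a b c where abc: "F!k = [a,b,c]"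
    by (metis (no_types, lifting) length_0_conv length_Suc_conv numeral_3_eq_3)
  have o: "orig_sat \<alpha> (F!k) = (lit_val \<alpha> (lift a) \<or> lit_val \<alpha> (lift b) \<or> lit_val \<alpha> (lift c))"
    by (simp add: abc orig_sat_def clause_sat_def lit_lift)
  have ob: "bcount (\<not> \<alpha> (D k)) (lit_val \<alpha> (lift a)) (lit_val \<alpha> (lift b)) (lit_val \<alpha> (lift c))
       \<le> bcount (\<alpha> (D k)) (lit_val \<alpha> (lift a)) (lit_val \<alpha> (lift b)) (lit_val \<alpha> (lift c))"
    using optimal_block[OF opt k] by (simp add: abc block_count)
  have bc: "num_sat \<alpha> (block F k) = bcount (\<alpha> (D k)) (lit_val \<alpha> (lift a)) (lit_val \<alpha> (lift b)) (lit_val \<alpha> (lift c))"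
    by (simp add: abc block_count)
  show ?thesis unfolding o bc using ob
    by (cases "\<alpha> (D k)"; cases "lit_val \<alpha> (lift a)"; cases "lit_val \<alpha> (lift b)"; cases "lit_val \<alpha> (lift c)")
       (simp_all add: bcount_def)
qed

theorem theorem2:
  fixes N :: nat and F :: "nat lit list list" and \<alpha> :: "var \<Rightarrow> bool"
  assumes "is_3sat N F"
    and "solves_max2sat F \<alpha>"
  defines "V \<equiv> Vcount F \<alpha> False + Vcount F \<alpha> True"
    and "S \<equiv> Scount F \<alpha> False + Scount F \<alpha> True"
  shows "({(v::nat, s::nat). 6*v + 7*s = frakS F \<alpha> False \<and> v + s = card (Iset F \<alpha> False)}
            = {(Vcount F \<alpha> False, Scount F \<alpha> False)})
        \<and> (Vcount F \<alpha> True, Scount F \<alpha> True) \<in> cand1 (frakS F \<alpha> True) (card (Iset F \<alpha> True))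
        \<and> finite (cand1 (frakS F \<alpha> True) (card (Iset F \<alpha> True)))
        \<and> (V, S) \<in> cand (frakS F \<alpha> False) (frakS F \<alpha> True) (card (Iset F \<alpha> False)) (card (Iset F \<alpha> True))
        \<and> finite (cand (frakS F \<alpha> False) (frakS F \<alpha> True) (card (Iset F \<alpha> False)) (card (Iset F \<alpha> True)))
        \<and> V = case1_count F \<alpha> \<and> S = length F - case1_count F \<alpha>
        \<and> (\<forall>(v, s) \<in> cand (frakS F \<alpha> False) (frakS F \<alpha> True) (card (Iset F \<alpha> False)) (card (Iset F \<alpha> True)).
             v = case1_count F \<alpha> \<longrightarrow> (v, s) = (V, S))"
proof -
  note K = key[OF assms(1,2)]
  define P where "P k = orig_sat \<alpha> (F!k)" for k
  define I0 where "I0 = Iset F \<alpha> False"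
  define I1 where "I1 = Iset F \<alpha> True"
  define V0 where "V0 = Vcount F \<alpha> False"
  define S0 where "S0 = Scount F \<alpha> False"
  define n0 where "n0 = card I0"
  define n1 where "n1 = card I1"
  have fin0: "finite I0" and fin1: "finite I1" unfolding I0_def I1_def Iset_def by auto
  have V0c: "V0 = card (I0 \<inter> - {k. P k})" unfolding V0_def Vcount_def I0_def P_def
    by (rule arg_cong[where f=card]) auto
  have S0c: "S0 = card (I0 \<inter> {k. P k})" unfolding S0_def Scount_def I0_def P_def
    by (rule arg_cong[where f=card]) auto
  have n0: "n0 = V0 + S0" unfolding n0_def V0c S0c
    by (subst card_Un_disjoint[symmetric]) (use fin0 in auto, rule arg_cong[where f=card], auto)
  have fS0: "frakS F \<alpha> False = 6*V0 + 7*S0"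
  proof -
    have "frakS F \<alpha> False = (\<Sum>k\<in>I0. if P k then 7 else 6)"
      unfolding frakS_def I0_def[symmetric]
      by (rule sum.cong) (use K in \<open>auto simp: I0_def Iset_def P_def\<close>)
    also have "\<dots> = 7*S0 + 6*V0"
      by (simp add: sum.If_cases fin0 V0c S0c)
    finally show ?thesis by simp
  qed
  have V1: "Vcount F \<alpha> True = 0"
    unfolding Vcount_def using K by (auto simp: Iset_def)
  have S1: "Scount F \<alpha> True = n1"
    unfolding Scount_def n1_def I1_def using K
    by (intro arg_cong[where f=card]) (auto simp: Iset_def)
  have fS1: "frakS F \<alpha> True = 7*n1"
  proof -
    have "frakS F \<alpha> True = (\<Sum>k\<in>I1. 7)"
      unfolding frakS_def I1_def[symmetric]
      by (rule sum.cong) (use K in \<open>auto simp: I1_def Iset_def\<close>)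
    thus ?thesis by (simp add: n1_def)
  qed
  have len: "length F = n0 + n1"
  proof -
    have "{..<length F} = I0 \<union> I1" by (auto simp: I0_def I1_def Iset_def)
    moreover have "I0 \<inter> I1 = {}" by (auto simp: I0_def I1_def Iset_def)
    ultimately show ?thesis unfolding n0_def n1_def
      by (metis card_Un_disjoint card_lessThan fin0 fin1)
  qed
  have c1: "case1_count F \<alpha> = V0"
  proof -
    have "{k. k < length F \<and> (\<forall>l\<in>set (F!k). \<not> lit_val (\<lambda>i. \<alpha> (Sig i)) l)} = I0 \<inter> - {k. P k}"
      using K by (auto simp: I0_def Iset_def P_def orig_sat_def clause_sat_def)
    thus ?thesis by (simp add: case1_count_def V0c)
  qed
  have VV: "V = V0" by (simp add: V_def V0_def V1)
  have SS: "S = S0 + n1" by (simp add: S_def S0_def S1)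
  have i: "{(v::nat, s::nat). 6*v + 7*s = frakS F \<alpha> False \<and> v + s = card (Iset F \<alpha> False)}
            = {(Vcount F \<alpha> False, Scount F \<alpha> False)}"
    unfolding fS0 I0_def[symmetric] n0_def[symmetric] n0 V0_def[symmetric] S0_def[symmetric]
    by auto
  have c1m: "(0, n1) \<in> cand1 (7*n1) n1" unfolding cand1_def
  proof (intro CollectI exI conjI)
    show "(0::nat, n1) = (0, 0 + n1)" by simp
  qed simp_all
  have fc1: "finite (cand1 S' n)" for S' n
    by (rule finite_subset[of _ "{..n} \<times> {..n}"]) (auto simp: cand1_def)
  have fc: "finite (cand a b n n')" for a b n n'
    by (rule finite_subset[of _ "{..n+n'} \<times> {..n+n'}"]) (auto simp: cand_def cand1_def)
  have cm: "(V, S) \<in> cand (frakS F \<alpha> False) (frakS F \<alpha> True) n0 n1"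
    unfolding cand_def fS0 fS1 VV SS using c1m n0
    by (intro CollectI exI[of _ V0] exI[of _ S0] exI[of _ 0] exI[of _ n1]) simp
  have last: "\<forall>(v, s) \<in> cand (frakS F \<alpha> False) (frakS F \<alpha> True) n0 n1.
             v = case1_count F \<alpha> \<longrightarrow> (v, s) = (V, S)"
    unfolding cand_def cand1_def c1 VV SS using n0 by auto
  show ?thesis
    using i c1m fc1 fc cm last len c1 VV SS n0
    unfolding V1 S1 fS1 n0_def[symmetric] n1_def[symmetric] I0_def[symmetric] I1_def[symmetric]
    by auto
qed

end
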